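(* There exist maps $t\mapsto\Gamma_t\in\mathbb{R}^{p\times p}$, with $\Gamma_t$ a continuous-time interconnection for each $t$, and $Q:\mathbb{R}\to\overline{\mathcal Q}_n$ such that the system $\dot{\mathbf x}=(\Gamma_t\otimes Q_t)\mathbf x$ has an unbounded solution.
   Context: $\otimes$ is the Kronecker product; $\overline{\mathcal Q}_n$ is the set of symmetric positive semidefinite $n\times n$ matrices with induced 2-norm at most $1$. A continuous-time interconnection is $\Gamma=[\gamma_{ij}]$ with $\gamma_{ij}\ge0$ for $i\ne j$ and $\gamma_{ii}=-\sum_{j\ne i}\gamma_{ij}$. *)

theory Defs
  imports "HOL-Analysis.Analysis"
begin

(* Matrices of size m x m are represented as nat => nat => real, only entries with
   indices < m are meaningful; vectors of length m as nat => real. *)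

definition ct_interconnection :: "nat \<Rightarrow> (nat \<Rightarrow> nat \<Rightarrow> real) \<Rightarrow> bool" where
  "ct_interconnection p G \<longleftrightarrow>
     (\<forall>i<p. \<forall>j<p. i \<noteq> j \<longrightarrow> G i j \<ge> 0) \<and>
     (\<forall>i<p. G i i = - (\<Sum>j\<in>{..<p} - {i}. G i j))"

definition Qbar :: "nat \<Rightarrow> (nat \<Rightarrow> nat \<Rightarrow> real) set" where
  "Qbar n = {Q. (\<forall>k<n. \<forall>l<n. Q k l = Q l k) \<and>
     (\<forall>v::nat\<Rightarrow>real. (\<Sum>k<n. \<Sum>l<n. v k * Q k l * v l) \<ge> 0) \<and>
     (\<forall>v::nat\<Rightarrow>real. (\<Sum>k<n. (\<Sum>l<n. Q k l * v l)\<^sup>2) \<le> (\<Sum>k<n. (v k)\<^sup>2))}"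

(* Kronecker product of a p x p matrix A with an n x n matrix B (a pn x pn matrix),
   row index i*n+k, column index j*n+l *)
definition kron :: "nat \<Rightarrow> (nat \<Rightarrow> nat \<Rightarrow> real) \<Rightarrow> (nat \<Rightarrow> nat \<Rightarrow> real) \<Rightarrow> nat \<Rightarrow> nat \<Rightarrow> real" where
  "kron n A B r c = A (r div n) (c div n) * B (r mod n) (c mod n)"

(* x is a (Caratheodory / integral-form) solution on [0,\<infinity>) of x' = M(t) x, dimension m *)
definition is_solution :: "nat \<Rightarrow> (real \<Rightarrow> nat \<Rightarrow> nat \<Rightarrow> real) \<Rightarrow> (real \<Rightarrow> nat \<Rightarrow> real) \<Rightarrow> bool" where
  "is_solution m M x \<longleftrightarrow>
     (\<forall>t\<ge>0. \<forall>r<m. ((\<lambda>s. \<Sum>c<m. M s r c * x s c) has_integral (x t r - x 0 r)) {0..t})"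

end

theory Submission
  imports Defs
begin
definition "X1 t = (2 * cos t + cos t  *  cos t + 2 * exp(-t) * cos t + exp(-t) * (3 * cos t * cos t - 3 * sin t * sin t - 2 * sin t * cos t)/5 + exp(-t))/4"
definition "Y1 t = (2 * sin t + sin t * cos t + t + 2 * exp(-t) * sin t + exp(-t) * (6 * sin t * cos t + cos t * cos t - sin t * sin t)/5 - exp(-t))/(4::real)"
definition "lam t = (1 + cos t)/(2::real)"
definition "D1 t = - exp(-t) * cos t - (1+exp(-t)) * sin (t::real)"
definition "D2 t = - exp(-t) * sin t + (1+exp(-t)) * cos (t::real)"

lemma dX1: "(X1 has_real_derivative (lam t * D1 t)) (at t)"
  unfolding X1_def[abs_def] lam_def D1_def
  apply (rule derivative_eq_intros refl | simp)+
  apply (simp add: field_simps)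
  using sin_cos_squared_add[of t] unfolding power2_eq_square by algebra

lemma dY1: "(Y1 has_real_derivative (lam t * D2 t)) (at t)"
  unfolding Y1_def[abs_def] lam_def D2_def
  apply (rule derivative_eq_intros refl | simp)+
  apply (simp add: field_simps)
  using sin_cos_squared_add[of t] unfolding power2_eq_square by algebra
definition rk1 :: "real \<Rightarrow> real \<Rightarrow> nat \<Rightarrow> nat \<Rightarrow> real" where "rk1 a b = (\<lambda>k l. (if k=0 then a else b)*(if l=0 then a else b)/(a^2+b^2))"

lemma rk1_Qbar: assumes "a^2+b^2>0" shows "rk1 a b \<in> Qbar 2"
proof -
  have sym: "\<forall>k<(2::nat). \<forall>l<(2::nat). rk1 a b k l = rk1 a b l k" unfolding rk1_def by auto
  have psd: "(\<Sum>k<(2::nat). \<Sum>l<(2::nat). v k * rk1 a b k l * v l) \<ge> 0" for v :: "nat \<Rightarrow> real"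
  proof -
    have "(\<Sum>k<(2::nat). \<Sum>l<(2::nat). v k * rk1 a b k l * v l) = (a * v 0 + b * v 1)^2/(a^2+b^2)"
      unfolding rk1_def using assms by (simp add: eval_nat_numeral power2_eq_square algebra_simps add_divide_distrib)
    thus ?thesis using assms by simp
  qed
  have nrm: "(\<Sum>k<(2::nat). (\<Sum>l<(2::nat). rk1 a b k l * v l)\<^sup>2) \<le> (\<Sum>k<(2::nat). (v k)\<^sup>2)" for v :: "nat \<Rightarrow> real"
  proof -
    have "(\<Sum>k<(2::nat). (\<Sum>l<(2::nat). rk1 a b k l * v l)\<^sup>2) = (a * v 0 + b * v 1)^2/(a^2+b^2)"
    proof -
      have nz: "a^2+b^2 \<noteq> 0" using assms by auto
      have inner: "(\<Sum>l<(2::nat). rk1 a b k l * v l) = (if k=0 then a else b) * (a * v 0 + b * v 1) / (a^2+b^2)" for k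
        unfolding rk1_def by (simp add: eval_nat_numeral algebra_simps add_divide_distrib)
      have "(\<Sum>k<(2::nat). (\<Sum>l<(2::nat). rk1 a b k l * v l)\<^sup>2) = (a^2 + b^2) * (a * v 0 + b * v 1)^2/(a^2+b^2)^2"
        unfolding inner by (simp add: eval_nat_numeral power_divide power_mult_distrib add_divide_distrib algebra_simps)
      also have "\<dots> = (a * v 0 + b * v 1)^2/(a^2+b^2)" using nz by (simp add: power2_eq_square[of "a^2+b^2"])
      finally show ?thesis .
    qed
    also have "\<dots> \<le> (v 0)^2 + (v 1)^2"
    proof -
      have "(a * v 0 + b * v 1)^2 \<le> (a^2+b^2) * ((v 0)^2 + (v 1)^2)"
      proof -
        have "(a^2+b^2) * ((v 0)^2 + (v 1)^2) - (a * v 0 + b * v 1)^2 = (a * v 1 - b * v 0)^2"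
          by (simp add: power2_eq_square algebra_simps)
        thus ?thesis using zero_le_power2[of "a * v 1 - b * v 0"] by linarith
      qed
      thus ?thesis using assms by (simp add: divide_le_eq mult.commute)
    qed
    also have "\<dots> = (\<Sum>k<(2::nat). (v k)\<^sup>2)" by (simp add: eval_nat_numeral)
    finally show ?thesis .
  qed
  show ?thesis unfolding Qbar_def using sym psd nrm by blast
qed
definition "d1 t = (1 + exp(-t)) * cos (t::real)"
definition "d2 t = (1 + exp(-t)) * sin (t::real)"
definition "PP t = exp(-t) * (1 + exp(-t::real))"
definition "NN t = (D1 t)^2 + (D2 t)^2"
definition "g01 t = lam t * NN t / PP t"
definition "g10 t = (1 - lam t) * NN t / PP t"
definition Gam :: "real \<Rightarrow> nat \<Rightarrow> nat \<Rightarrow> real" where "Gam t = (\<lambda>i j. if i = 0 then (if j = 0 then - g01 t else if j = 1 then g01 t else 0)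
   else if i = 1 then (if j = 0 then g10 t else if j = 1 then - g10 t else 0) else (0::real))"
definition QQ :: "real \<Rightarrow> nat \<Rightarrow> nat \<Rightarrow> real" where "QQ t = rk1 (D1 t) (D2 t)"
definition xx :: "real \<Rightarrow> nat \<Rightarrow> real" where "xx t r = (if r = 0 then X1 t else if r = 1 then Y1 t else if r = 2 then X1 t - d1 t else Y1 t - d2 t)"

lemma PP_pos: "PP t > 0" unfolding PP_def by (simp add: add_pos_pos)
lemma NN_pos: "NN t > 0"
proof -
  have "NN t = (exp(-t))^2 + (1 + exp(-t))^2"
    unfolding NN_def D1_def D2_def apply (simp add: power2_eq_square algebra_simps)
    using sin_cos_squared_add[of t] unfolding power2_eq_square by algebra
  moreover have "1 + exp(-t) > 0" by (simp add: add_pos_pos)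
  hence "(1+exp(-t))^2 > 0" by simp
  ultimately show ?thesis using zero_le_power2[of "exp(-t)"] by linarith
qed
lemma Dd: "D1 t * d1 t + D2 t * d2 t = - PP t"
  unfolding D1_def D2_def d1_def d2_def PP_def apply (simp add: power2_eq_square algebra_simps)
    using sin_cos_squared_add[of t] unfolding power2_eq_square by algebra

lemma lam_bounds: "0 \<le> lam t" "lam t \<le> 1"
proof -
  have "0 \<le> 1 + cos t" "cos t \<le> 1" using cos_ge_minus_one[of t] cos_le_one[of t] by linarith+
  thus "0 \<le> lam t" "lam t \<le> 1" by (simp_all add: lam_def)
qed

lemma Gam_ct: "ct_interconnection 2 (Gam t)"
proof -
  have "g01 t \<ge> 0" "g10 t \<ge> 0" unfolding g01_def g10_def
    using lam_bounds[of t] NN_pos[of t] PP_pos[of t] by auto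
  thus ?thesis unfolding ct_interconnection_def Gam_def
    by (auto simp: less_2_cases_iff insert_Diff_if lessThan_def eval_nat_numeral)
qed

definition integ :: "real \<Rightarrow> nat \<Rightarrow> real" where "integ s r = (\<Sum>c<(4::nat). kron 2 (Gam s) (QQ s) r c * xx s c)"

lemma integ_eq:
  "integ s 0 = lam s * D1 s" "integ s 1 = lam s * D2 s"
  "integ s 2 = (lam s - 1) * D1 s" "integ s 3 = (lam s - 1) * D2 s"
proof -
  have N: "NN s \<noteq> 0" using NN_pos[of s] by simp
  have P: "PP s \<noteq> 0" using PP_pos[of s] by simp
  have N2: "(D1 s)^2 + (D2 s)^2 = NN s" by (simp add: NN_def)
  have four: "{..<(4::nat)} = {0,1,2,3}" by auto
  have Q: "QQ s k l = (if k=0 then D1 s else D2 s) * (if l=0 then D1 s else D2 s) / NN s" for k l :: nat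
    unfolding QQ_def rk1_def N2 by simp
  have x2: "xx s 2 - xx s 0 = - d1 s" and x3: "xx s 3 - xx s 1 = - d2 s"
    by (simp_all add: xx_def)
  have i0: "integ s k = g01 s * (QQ s k 0 * (xx s 2 - xx s 0) + QQ s k 1 * (xx s 3 - xx s 1))"
    if "k < 2" for k :: nat
    using that unfolding less_2_cases_iff integ_def four kron_def Gam_def by (elim disjE) (simp_all add: algebra_simps)
  have i1: "integ s (2 + k) = g10 s * (QQ s k 0 * (xx s 0 - xx s 2) + QQ s k 1 * (xx s 1 - xx s 3))"
    if "k < 2" for k :: nat
    using that unfolding less_2_cases_iff integ_def four kron_def Gam_def by (elim disjE) (simp_all add: algebra_simps)
  have core: "QQ s k 0 * (- d1 s) + QQ s k 1 * (- d2 s) = (if k=0 then D1 s else D2 s) * PP s / NN s" for k :: nat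
  proof -
    have "QQ s k 0 * (- d1 s) + QQ s k 1 * (- d2 s)
       = - (if k=0 then D1 s else D2 s) * (D1 s * d1 s + D2 s * d2 s) / NN s"
      unfolding Q by (simp add: algebra_simps add_divide_distrib diff_divide_distrib)
    also have "\<dots> = (if k=0 then D1 s else D2 s) * PP s / NN s" using Dd[of s] by simp
    finally show ?thesis .
  qed
  have a: "g01 s * ((if k=0 then D1 s else D2 s) * PP s / NN s) = lam s * (if k=0 then D1 s else D2 s)" for k :: nat
    unfolding g01_def using N P by (simp add: field_simps)
  have b: "g10 s * (- ((if k=0 then D1 s else D2 s) * PP s / NN s)) = (lam s - 1) * (if k=0 then D1 s else D2 s)" for k :: nat
    unfolding g10_def using N P by (simp add: field_simps)
  have c0: "integ s k = lam s * (if k=0 then D1 s else D2 s)" if "k<2" for k :: nat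
  proof -
    have "integ s k = g01 s * (QQ s k 0 * (- d1 s) + QQ s k 1 * (- d2 s))"
      using i0[OF that] x2 x3 by (simp only:)
    also have "\<dots> = g01 s * ((if k=0 then D1 s else D2 s) * PP s / NN s)" by (simp only: core)
    also have "\<dots> = lam s * (if k=0 then D1 s else D2 s)" by (rule a)
    finally show ?thesis .
  qed
  have c1: "integ s (2+k) = (lam s - 1) * (if k=0 then D1 s else D2 s)" if "k<2" for k :: nat
  proof -
    have y: "xx s 0 - xx s 2 = d1 s" "xx s 1 - xx s 3 = d2 s" by (simp_all add: xx_def)
    have "integ s (2+k) = g10 s * (QQ s k 0 * d1 s + QQ s k 1 * d2 s)"
      using i1[OF that] y by (simp only:)
    also have "QQ s k 0 * d1 s + QQ s k 1 * d2 s = - (QQ s k 0 * (- d1 s) + QQ s k 1 * (- d2 s))" by simp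
    also have "\<dots> = - ((if k=0 then D1 s else D2 s) * PP s / NN s)" by (simp only: core)
    also have "g10 s * \<dots> = (lam s - 1) * (if k=0 then D1 s else D2 s)" by (rule b)
    finally show ?thesis .
  qed
  show "integ s 0 = lam s * D1 s" using c0[of 0] by simp
  show "integ s 1 = lam s * D2 s" using c0[of 1] by simp
  show "integ s 2 = (lam s - 1) * D1 s" using c1[of 0] by simp
  show "integ s 3 = (lam s - 1) * D2 s" using c1[of 1] by simp
qed
lemma dd1: "(d1 has_real_derivative D1 t) (at t)"
  unfolding d1_def[abs_def] D1_def
  by (rule derivative_eq_intros refl | simp)+
lemma dd2: "(d2 has_real_derivative D2 t) (at t)"
  unfolding d2_def[abs_def] D2_def
  by (rule derivative_eq_intros refl | simp)+

lemma dxx: "r < 4 \<Longrightarrow> ((\<lambda>s. xx s r) has_real_derivative integ t r) (at t)"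
proof -
  assume r: "r < 4"
  have "r = 0 \<or> r = 1 \<or> r = 2 \<or> r = 3" using r by auto
  moreover have "((\<lambda>s. xx s 0) has_real_derivative integ t 0) (at t)"
    unfolding xx_def integ_eq using dX1 by simp
  moreover have "((\<lambda>s. xx s 1) has_real_derivative integ t 1) (at t)"
    unfolding xx_def integ_eq using dY1 by simp
  moreover have "((\<lambda>s. xx s 2) has_real_derivative integ t 2) (at t)"
  proof -
    have "((\<lambda>s. X1 s - d1 s) has_real_derivative (lam t * D1 t - D1 t)) (at t)"
      using DERIV_diff[OF dX1 dd1] by simp
    thus ?thesis unfolding xx_def integ_eq by (simp add: algebra_simps)
  qed
  moreover have "((\<lambda>s. xx s 3) has_real_derivative integ t 3) (at t)"
  proof -
    have "((\<lambda>s. Y1 s - d2 s) has_real_derivative (lam t * D2 t - D2 t)) (at t)"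
      using DERIV_diff[OF dY1 dd2] by simp
    thus ?thesis unfolding xx_def integ_eq by (simp add: algebra_simps)
  qed
  ultimately show ?thesis by auto
qed

lemma lin_aux: fixes a b c E e t :: real
  assumes "-a \<le> 1" "-b \<le> 1" "-c \<le> 1" "-E \<le> 1*8" "e \<le> 1"
  shows "(t - 8)/4 \<le> (2*a + b + t + 2*c + E/5 - e)/4"
  using assms by (simp add: field_simps)

lemma Y1_lower: assumes "t \<ge> 0" shows "Y1 t \<ge> (t - 8) / 4"
proof -
  have e0: "0 < exp(-t)" and e1: "exp(-t) \<le> 1" using assms by auto
  have s1: "\<bar>sin t\<bar> \<le> 1" and c1: "\<bar>cos t\<bar> \<le> 1" by simp_all
  have sc: "\<bar>sin t * cos t\<bar> \<le> 1" using s1 c1 by (simp add: abs_mult mult_le_one)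
  have es: "\<bar>exp(-t) * sin t\<bar> \<le> 1" using s1 e1 e0 by (simp add: abs_mult mult_le_one)
  have sq: "sin t * sin t + cos t * cos t = 1" using sin_cos_squared_add[of t] by (simp add: power2_eq_square)
  have z: "0 \<le> sin t * sin t" "0 \<le> cos t * cos t" by simp_all
  have inner: "\<bar>6 * (sin t * cos t) + cos t * cos t - sin t * sin t\<bar> \<le> 8" using sc sq z unfolding abs_le_iff by linarith
  have "\<bar>exp(-t) * (6 * (sin t * cos t) + cos t * cos t - sin t * sin t)\<bar> \<le> 1 * 8"
    unfolding abs_mult using e0 e1 inner by (intro mult_mono) auto
  moreover have Y: "Y1 t = (2 * sin t + sin t * cos t + t + 2 * (exp(-t) * sin t) + exp(-t) * (6 * (sin t * cos t) + cos t * cos t - sin t * sin t)/5 - exp(-t))/4"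
    by (simp add: Y1_def algebra_simps)
  ultimately show ?thesis using s1 sc es e1 unfolding abs_le_iff Y by (intro lin_aux) auto
qed
lemma sol: "is_solution (2 * 2) (\<lambda>t. kron 2 (Gam t) (QQ t)) xx"
  unfolding is_solution_def
proof (intro allI impI)
  fix t :: real and r :: nat
  assume t: "0 \<le> t" and r: "r < 2 * 2"
  have "((\<lambda>s. integ s r) has_integral (xx t r - xx 0 r)) {0..t}"
  proof (rule fundamental_theorem_of_calculus[OF t])
    fix s :: real
    assume "s \<in> {0..t}"
    show "((\<lambda>s. xx s r) has_vector_derivative integ s r) (at s within {0..t})"
    proof -
      have "((\<lambda>s. xx s r) has_real_derivative integ s r) (at s)" using dxx r by simp
      hence "((\<lambda>s. xx s r) has_vector_derivative integ s r) (at s)"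
        by (simp add: has_real_derivative_iff_has_vector_derivative)
      thus ?thesis
        by (rule has_vector_derivative_at_within)
    qed
  qed
  thus "((\<lambda>s. \<Sum>c<2 * 2. kron 2 (Gam s) (QQ s) r c * xx s c) has_integral (xx t r - xx 0 r)) {0..t}"
    unfolding integ_def by simp
qed

theorem theorem6:
  shows "\<exists>(p::nat) (n::nat) (\<Gamma>::real \<Rightarrow> nat \<Rightarrow> nat \<Rightarrow> real) (Q::real \<Rightarrow> nat \<Rightarrow> nat \<Rightarrow> real)
           (x::real \<Rightarrow> nat \<Rightarrow> real).
     (\<forall>t. ct_interconnection p (\<Gamma> t)) \<and> (\<forall>t. Q t \<in> Qbar n) \<and>
     is_solution (p * n) (\<lambda>t. kron n (\<Gamma> t) (Q t)) x \<and>
     \<not> (\<exists>B. \<forall>t\<ge>0. \<forall>r<p * n. \<bar>x t r\<bar> \<le> B)"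
  apply (rule exI[of _ 2], rule exI[of _ 2], rule exI[of _ Gam], rule exI[of _ QQ], rule exI[of _ xx])
proof (intro conjI)
  show "is_solution (2 * 2) (\<lambda>t. kron 2 (Gam t) (QQ t)) xx" by (rule sol)
  show "\<forall>t. ct_interconnection 2 (Gam t)" using Gam_ct by blast
  show "\<forall>t. QQ t \<in> Qbar 2"
  proof
    fix t
    have "(D1 t)^2 + (D2 t)^2 > 0" using NN_pos[of t] by (simp add: NN_def)
    thus "QQ t \<in> Qbar 2" unfolding QQ_def by (rule rk1_Qbar)
  qed
  show "\<not> (\<exists>B. \<forall>t\<ge>0. \<forall>r<2 * 2. \<bar>xx t r\<bar> \<le> B)"
  proof
    assume "\<exists>B. \<forall>t\<ge>0. \<forall>r<2 * 2. \<bar>xx t r\<bar> \<le> B"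
    then obtain B where B: "\<forall>t\<ge>0. \<forall>r<2 * 2. \<bar>xx t r\<bar> \<le> B" by blast
    define T where "T = 4 * \<bar>B\<bar> + 12"
    have T0: "T \<ge> 0" unfolding T_def by simp
    have "\<bar>xx T 1\<bar> \<le> B" using B T0 by auto
    moreover have "xx T 1 = Y1 T" by (simp add: xx_def)
    moreover have "Y1 T \<ge> (T - 8)/4" using Y1_lower[OF T0] .
    moreover have "\<bar>B\<bar> \<ge> B" "\<bar>xx T 1\<bar> \<ge> xx T 1" by simp_all
    moreover have "(T - 8) / 4 = \<bar>B\<bar> + 1" using T_def by simp
    ultimately show False by linarith
  qed
qed
end
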